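(* Let $k$ be a field of characteristic $0$ and let $F(X,Y), G(X,Y)\in k[X,Y]$ be such that the determinant of the Jacobian matrix $\begin{pmatrix}\partial F/\partial X & \partial F/\partial Y\\ \partial G/\partial X & \partial G/\partial Y\end{pmatrix}$ is a nonzero element of $k$. Then the system $$F(\mathcal{U}(t),\mathcal{V}(t))=tX+(1-t)F(X,Y),\qquad G(\mathcal{U}(t),\mathcal{V}(t))=tY+(1-t)G(X,Y),$$ with initial conditions $\mathcal{U}(0)=X$, $\mathcal{V}(0)=Y$, has a unique solution $\mathcal{U}(t),\mathcal{V}(t)\in k[X,Y][[t]]$.
   Context: $k[X,Y][[t]]$ denotes the ring of formal power series in $t$ with coefficients in $k[X,Y]$; for a power series, evaluation at $t=0$ means taking its constant term. *)

theory Defs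
  imports "HOL-Computational_Algebra.Polynomial" "HOL-Computational_Algebra.Formal_Power_Series"
begin

text \<open>We model k[X,Y] as (k[X])[Y], i.e. the type 'a poly poly:
 the outer variable is Y, the coefficients are polynomials in X.\<close>

definition varX :: "'a::comm_semiring_1 poly poly" where
  "varX = [:[:0, 1:]:]"

definition varY :: "'a::comm_semiring_1 poly poly" where
  "varY = [:0, 1:]"

definition pdX :: "'a::idom poly poly \<Rightarrow> 'a poly poly" where
  "pdX F = map_poly pderiv F"

definition pdY :: "'a::idom poly poly \<Rightarrow> 'a poly poly" where
  "pdY F = pderiv F"

text \<open>Substitution F(U,V) of power series U, V in k[X,Y][[t]] into F in k[X,Y]
  (k embedded as constants).\<close>
definition eval2 :: "'a::idom poly poly \<Rightarrow> 'a poly poly fps \<Rightarrow> 'a poly poly fps \<Rightarrow> 'a poly poly fps" where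
  "eval2 F U V = poly (map_poly (\<lambda>q. poly (map_poly (\<lambda>c. fps_const [:[:c:]:]) q) U) F) V"

end

theory Submission
  imports Defs
begin
notation fps_nth (infixl "\<dollar>" 75)

definition causal :: "('b fps \<Rightarrow> 'b fps \<Rightarrow> 'b fps) \<Rightarrow> bool" where
 "causal P \<longleftrightarrow> (\<forall>U V U' V' m. (\<forall>k\<le>m. U \<dollar> k = U' \<dollar> k \<and> V \<dollar> k = V' \<dollar> k) \<longrightarrow> P U V \<dollar> m = P U' V' \<dollar> m)"

definition good :: "'b::comm_ring_1 \<Rightarrow> 'b \<Rightarrow> ('b fps \<Rightarrow> 'b fps \<Rightarrow> 'b fps) \<Rightarrow> 'b \<Rightarrow> 'b \<Rightarrow> 'b \<Rightarrow> bool" where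
 "good x0 y0 P c D1 D2 \<longleftrightarrow> causal P \<and> (\<forall>U V. U \<dollar> 0 = x0 \<longrightarrow> V \<dollar> 0 = y0 \<longrightarrow> P U V \<dollar> 0 = c) \<and>
   (\<forall>U V U' V' n. 0<n \<longrightarrow> U \<dollar> 0 = x0 \<longrightarrow> V \<dollar> 0 = y0 \<longrightarrow> (\<forall>k<n. U \<dollar> k = U' \<dollar> k \<and> V \<dollar> k = V' \<dollar> k) \<longrightarrow>
      P U V \<dollar> n - P U' V' \<dollar> n = D1*(U \<dollar> n - U' \<dollar> n) + D2*(V \<dollar> n - V' \<dollar> n))"

lemma good_const: "good x0 y0 (\<lambda>U V. fps_const a) a 0 0"
  unfolding good_def causal_def by simp

lemma good_U: "good x0 y0 (\<lambda>U V. U) x0 1 0"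
  unfolding good_def causal_def by simp

lemma good_V: "good x0 y0 (\<lambda>U V. V) y0 0 1"
  unfolding good_def causal_def by simp

lemma good_add: assumes A: "good x0 y0 P c D1 D2" and B: "good x0 y0 Q d E1 E2"
  shows "good x0 y0 (\<lambda>U V. P U V + Q U V) (c+d) (D1+E1) (D2+E2)"
proof -
  have cP: "causal P" and cQ: "causal Q" using A B unfolding good_def by auto
  have c: "causal (\<lambda>U V. P U V + Q U V)"
    unfolding causal_def
  proof (intro allI impI)
    fix U V U' V' :: "'a fps" and m
    assume h: "\<forall>k\<le>m. U \<dollar> k = U' \<dollar> k \<and> V \<dollar> k = V' \<dollar> k"
    have "P U V \<dollar> m = P U' V' \<dollar> m" using cP h unfolding causal_def by blast
    moreover have "Q U V \<dollar> m = Q U' V' \<dollar> m" using cQ h unfolding causal_def by blast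
    ultimately show "(P U V + Q U V) \<dollar> m = (P U' V' + Q U' V') \<dollar> m" by simp
  qed
  show ?thesis unfolding good_def
  proof (intro conjI c allI impI)
    fix U V :: "'a fps" assume "U \<dollar> 0 = x0" "V \<dollar> 0 = y0"
    then show "(P U V + Q U V) \<dollar> 0 = c + d" using A B unfolding good_def by simp
  next
    fix U V U' V' :: "'a fps" and n :: nat
    assume n: "0 < n" and u0: "U \<dollar> 0 = x0" and v0: "V \<dollar> 0 = y0" and ag: "\<forall>k<n. U \<dollar> k = U' \<dollar> k \<and> V \<dollar> k = V' \<dollar> k"
    have dP: "P U V \<dollar> n - P U' V' \<dollar> n = D1*(U \<dollar> n - U' \<dollar> n) + D2*(V \<dollar> n - V' \<dollar> n)"
      using A n u0 v0 ag unfolding good_def by blast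
    have dQ: "Q U V \<dollar> n - Q U' V' \<dollar> n = E1*(U \<dollar> n - U' \<dollar> n) + E2*(V \<dollar> n - V' \<dollar> n)"
      using B n u0 v0 ag unfolding good_def by blast
    show "(P U V + Q U V) \<dollar> n - (P U' V' + Q U' V') \<dollar> n =
       (D1 + E1) * (U \<dollar> n - U' \<dollar> n) + (D2 + E2) * (V \<dollar> n - V' \<dollar> n)"
      using dP dQ by (simp add: algebra_simps)
  qed
qed

lemma good_mult: assumes "good x0 y0 P c D1 D2" "good x0 y0 Q d E1 E2"
  shows "good x0 y0 (\<lambda>U V. P U V * Q U V) (c*d) (c*E1 + d*D1) (c*E2 + d*D2)"
proof -
  have cP: "causal P" and cQ: "causal Q" using assms unfolding good_def by auto
  have c: "causal (\<lambda>U V. P U V * Q U V)"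
    unfolding causal_def fps_mult_nth
  proof (intro allI impI)
    fix U V U' V' :: "'a fps" and m
    assume h: "\<forall>k\<le>m. U \<dollar> k = U' \<dollar> k \<and> V \<dollar> k = V' \<dollar> k"
    show "(\<Sum>i = 0..m. P U V \<dollar> i * Q U V \<dollar> (m - i)) = (\<Sum>i = 0..m. P U' V' \<dollar> i * Q U' V' \<dollar> (m - i))"
    proof (rule sum.cong[OF refl])
      fix i assume "i \<in> {0..m}"
      then have "P U V \<dollar> i = P U' V' \<dollar> i" "Q U V \<dollar> (m-i) = Q U' V' \<dollar> (m-i)"
        using cP cQ h unfolding causal_def by auto
      then show "P U V \<dollar> i * Q U V \<dollar> (m - i) = P U' V' \<dollar> i * Q U' V' \<dollar> (m - i)" by simp
    qed
  qed
  show ?thesis unfolding good_def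
  proof (intro conjI c allI impI)
    fix U V :: "'a fps" assume "U \<dollar> 0 = x0" "V \<dollar> 0 = y0"
    then show "(P U V * Q U V) \<dollar> 0 = c*d" using assms unfolding good_def by simp
  next
    fix U V U' V' :: "'a fps" and n :: nat
    assume n: "0 < n" and u0: "U \<dollar> 0 = x0" and v0: "V \<dollar> 0 = y0" and ag: "\<forall>k<n. U \<dollar> k = U' \<dollar> k \<and> V \<dollar> k = V' \<dollar> k"
    have agl: "\<forall>k\<le>i. U \<dollar> k = U' \<dollar> k \<and> V \<dollar> k = V' \<dollar> k" if "i < n" for i using ag that by auto
    have Pe: "P U V \<dollar> i = P U' V' \<dollar> i" if "i < n" for i using cP agl[OF that] unfolding causal_def by blast
    have Qe: "Q U V \<dollar> i = Q U' V' \<dollar> i" if "i < n" for i using cQ agl[OF that] unfolding causal_def by blast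
    have P0: "P U V \<dollar> 0 = c" "Q U V \<dollar> 0 = d" using assms u0 v0 unfolding good_def by auto
    have P0': "P U' V' \<dollar> 0 = c" using Pe[of 0] n P0 by simp
    have dP: "P U V \<dollar> n - P U' V' \<dollar> n = D1*(U \<dollar> n - U' \<dollar> n) + D2*(V \<dollar> n - V' \<dollar> n)"
      using assms(1) n u0 v0 ag unfolding good_def by blast
    have dQ: "Q U V \<dollar> n - Q U' V' \<dollar> n = E1*(U \<dollar> n - U' \<dollar> n) + E2*(V \<dollar> n - V' \<dollar> n)"
      using assms(2) n u0 v0 ag unfolding good_def by blast
    have split: "P U V \<dollar> i * Q U V \<dollar> (n - i) - P U' V' \<dollar> i * Q U' V' \<dollar> (n - i) =
       (P U V \<dollar> i - P U' V' \<dollar> i) * Q U V \<dollar> (n - i) + P U' V' \<dollar> i * (Q U V \<dollar> (n - i) - Q U' V' \<dollar> (n - i))" for i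
      by (simp add: algebra_simps)
    have s1: "(\<Sum>i = 0..n. (P U V \<dollar> i - P U' V' \<dollar> i) * Q U V \<dollar> (n - i)) =
        (\<Sum>i = 0..n. if i = n then (P U V \<dollar> n - P U' V' \<dollar> n) * d else 0)"
      by (rule sum.cong[OF refl]) (auto simp: Pe P0)
    have s2: "(\<Sum>i = 0..n. P U' V' \<dollar> i * (Q U V \<dollar> (n - i) - Q U' V' \<dollar> (n - i))) =
        (\<Sum>i = 0..n. if i = 0 then c * (Q U V \<dollar> n - Q U' V' \<dollar> n) else 0)"
      by (rule sum.cong[OF refl]) (auto simp: Qe P0')
    have "(P U V * Q U V) \<dollar> n - (P U' V' * Q U' V') \<dollar> n =
       (P U V \<dollar> n - P U' V' \<dollar> n) * d + c * (Q U V \<dollar> n - Q U' V' \<dollar> n)"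
      unfolding fps_mult_nth sum_subtractf[symmetric] split sum.distrib s1 s2 by simp
    then show "(P U V * Q U V) \<dollar> n - (P U' V' * Q U' V') \<dollar> n =
       (c * E1 + d * D1) * (U \<dollar> n - U' \<dollar> n) + (c * E2 + d * D2) * (V \<dollar> n - V' \<dollar> n)"
      using dP dQ by (simp add: algebra_simps)
  qed
qed

lemma good_cong: "good x y P c D1 D2 \<Longrightarrow> c = c' \<Longrightarrow> D1 = D1' \<Longrightarrow> D2 = D2' \<Longrightarrow> good x y P c' D1' D2'"
  by simp

lemma good_inner: "good varX varY (\<lambda>U V. poly (map_poly (\<lambda>c. fps_const [:[:c:]:]) a) U) [:a:] [:pderiv a:] (0::'a::field_char_0 poly poly)"
proof (induction a)
  case 0
  then show ?case using good_const[of varX varY 0] by simp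
next
  case (pCons b a)
  have e: "(\<lambda>U V. poly (map_poly (\<lambda>c. fps_const [:[:c:]:]) (pCons b a)) U) =
      (\<lambda>U V. fps_const [:[:b:]:] + U * poly (map_poly (\<lambda>c. fps_const [:[:c:]:]) a) U)"
    by (simp add: map_poly_pCons)
  have g: "good varX varY (\<lambda>U V. fps_const [:[:b:]:] + U * poly (map_poly (\<lambda>c. fps_const [:[:c:]:]) a) U)
     ([:[:b:]:] + varX * [:a:]) (0 + (varX * [:pderiv a:] + [:a:] * 1)) (0 + (varX * 0 + [:a:] * 0))"
    by (intro good_add good_const good_mult good_U pCons.IH)
  show ?case unfolding e
    by (rule good_cong[OF g]) (simp_all add: varX_def pderiv_pCons)
qed

lemma eval2_pCons: "eval2 (pCons a F) U V =
   poly (map_poly (\<lambda>c. fps_const [:[:c:]:]) a) U + V * eval2 F U V"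
  unfolding eval2_def by (simp add: map_poly_pCons)

lemma good_eval2: "good varX varY (\<lambda>U V. eval2 F U V) F (pdX F) (pdY (F::'a::field_char_0 poly poly))"
proof (induction F)
  case 0
  then show ?case using good_const[of varX varY 0] by (simp add: eval2_def pdX_def pdY_def)
next
  case (pCons a F)
  have g: "good varX varY (\<lambda>U V. poly (map_poly (\<lambda>c. fps_const [:[:c:]:]) a) U + V * eval2 F U V)
     ([:a:] + varY * F) ([:pderiv a:] + (varY * pdX F + F * 0)) (0 + (varY * pdY F + F * 1))"
    by (intro good_add good_mult good_V good_inner pCons.IH)
  show ?case unfolding eval2_pCons
    by (rule good_cong[OF g]) (simp_all add: varY_def pdX_def pdY_def pderiv_pCons map_poly_pCons)
qed


lemma lin_uniq:
  fixes a b c d w u v :: "'b::comm_ring_1"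
  assumes "w * (a*d - b*c) = 1"
  shows "u = w*(d*(a*u+b*v) - b*(c*u+d*v))" "v = w*(a*(c*u+d*v) - c*(a*u+b*v))"
proof -
  have "w*(d*(a*u+b*v) - b*(c*u+d*v)) = (w*(a*d-b*c))*u"
       "w*(a*(c*u+d*v) - c*(a*u+b*v)) = (w*(a*d-b*c))*v" by (simp_all add: algebra_simps)
  then show "u = w*(d*(a*u+b*v) - b*(c*u+d*v))" "v = w*(a*(c*u+d*v) - c*(a*u+b*v))"
    using assms by simp_all
qed

lemma lin_sol:
  fixes a b c d w x y :: "'b::comm_ring_1"
  assumes "w * (a*d - b*c) = 1"
  shows "a*(w*(d*x - b*y)) + b*(w*(a*y - c*x)) = x" "c*(w*(d*x - b*y)) + d*(w*(a*y - c*x)) = y"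
proof -
  have "a*(w*(d*x - b*y)) + b*(w*(a*y - c*x)) = (w*(a*d-b*c))*x"
       "c*(w*(d*x - b*y)) + d*(w*(a*y - c*x)) = (w*(a*d-b*c))*y" by (simp_all add: algebra_simps)
  then show "a*(w*(d*x - b*y)) + b*(w*(a*y - c*x)) = x" "c*(w*(d*x - b*y)) + d*(w*(a*y - c*x)) = y"
    using assms by simp_all
qed

primrec approxS :: "'b::field_char_0 poly poly \<Rightarrow> 'b poly poly \<Rightarrow> 'b poly poly fps \<Rightarrow> 'b poly poly fps \<Rightarrow> 'b poly poly \<Rightarrow> nat \<Rightarrow> 'b poly poly fps \<times> 'b poly poly fps" where
  "approxS F G TF TG w 0 = (fps_const varX, fps_const varY)"
| "approxS F G TF TG w (Suc n) =
    (let A = fst (approxS F G TF TG w n); B = snd (approxS F G TF TG w n);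
         x = TF \<dollar> Suc n - eval2 F A B \<dollar> Suc n; y = TG \<dollar> Suc n - eval2 G A B \<dollar> Suc n
     in (Abs_fps (\<lambda>k. if k = Suc n then A \<dollar> k + w*(pdY G*x - pdY F*y) else A \<dollar> k),
         Abs_fps (\<lambda>k. if k = Suc n then B \<dollar> k + w*(pdX F*y - pdX G*x) else B \<dollar> k)))"

lemma approxS_stable:
  assumes "k \<le> n" "n \<le> m"
  shows "fst (approxS F G TF TG w m) \<dollar> k = fst (approxS F G TF TG w n) \<dollar> k \<and>
         snd (approxS F G TF TG w m) \<dollar> k = snd (approxS F G TF TG w n) \<dollar> k"
  using assms(2)
proof (induction m)
  case 0 then show ?case by simp
next
  case (Suc m)
  show ?case
  proof (cases "n = Suc m")
    case False
    then have "n \<le> m" using Suc.prems by simp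
    moreover have "k \<noteq> Suc m" using assms(1) \<open>n \<le> m\<close> by simp
    ultimately show ?thesis using Suc.IH by (simp add: Let_def)
  qed simp
qed

theorem theorem3p2:
  fixes F G :: "'a::field_char_0 poly poly"
  assumes jac: "\<exists>c. c \<noteq> 0 \<and> pdX F * pdY G - pdY F * pdX G = [:[:c:]:]"
  shows "\<exists>!UV :: 'a poly poly fps \<times> 'a poly poly fps.
           eval2 F (fst UV) (snd UV) = fps_X * fps_const varX + (1 - fps_X) * fps_const F \<and>
           eval2 G (fst UV) (snd UV) = fps_X * fps_const varY + (1 - fps_X) * fps_const G \<and>
           fps_nth (fst UV) 0 = varX \<and> fps_nth (snd UV) 0 = varY"
proof -
  obtain c where c: "c \<noteq> 0" "pdX F * pdY G - pdY F * pdX G = [:[:c:]:]" using jac by blast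
  define w :: "'a poly poly" where "w = [:[:inverse c:]:]"
  have w: "w * (pdX F * pdY G - pdY F * pdX G) = 1" unfolding c(2) w_def using c(1)
    by (simp add: one_pCons)
  define TF where "TF = fps_X * fps_const varX + (1 - fps_X) * fps_const F"
  define TG where "TG = fps_X * fps_const varY + (1 - fps_X) * fps_const G"
  have TF0: "TF \<dollar> 0 = F" "TG \<dollar> 0 = G" unfolding TF_def TG_def by simp_all
  have gF: "good varX varY (\<lambda>U V. eval2 F U V) F (pdX F) (pdY F)" by (rule good_eval2)
  have gG: "good varX varY (\<lambda>U V. eval2 G U V) G (pdX G) (pdY G)" by (rule good_eval2)
  let ?P = "\<lambda>UV :: 'a poly poly fps \<times> 'a poly poly fps. eval2 F (fst UV) (snd UV) = TF \<and>
           eval2 G (fst UV) (snd UV) = TG \<and> fps_nth (fst UV) 0 = varX \<and> fps_nth (snd UV) 0 = varY"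
  have uniq: "p = q" if p: "?P p" and q: "?P q" for p q
  proof -
    have "\<forall>k<n. fst p \<dollar> k = fst q \<dollar> k \<and> snd p \<dollar> k = snd q \<dollar> k" for n
    proof (induction n)
      case 0 then show ?case by simp
    next
      case (Suc n)
      have "fst p \<dollar> n = fst q \<dollar> n \<and> snd p \<dollar> n = snd q \<dollar> n"
      proof (cases "n = 0")
        case True then show ?thesis using p q by simp
      next
        case False
        have "eval2 F (fst p) (snd p) \<dollar> n - eval2 F (fst q) (snd q) \<dollar> n =
            pdX F * (fst p \<dollar> n - fst q \<dollar> n) + pdY F * (snd p \<dollar> n - snd q \<dollar> n)"
          using gF False p Suc.IH unfolding good_def by blast
        then have e1: "pdX F * (fst p \<dollar> n - fst q \<dollar> n) + pdY F * (snd p \<dollar> n - snd q \<dollar> n) = 0"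
          using p q by simp
        have "eval2 G (fst p) (snd p) \<dollar> n - eval2 G (fst q) (snd q) \<dollar> n =
            pdX G * (fst p \<dollar> n - fst q \<dollar> n) + pdY G * (snd p \<dollar> n - snd q \<dollar> n)"
          using gG False p Suc.IH unfolding good_def by blast
        then have e2: "pdX G * (fst p \<dollar> n - fst q \<dollar> n) + pdY G * (snd p \<dollar> n - snd q \<dollar> n) = 0"
          using p q by simp
        have u1: "fst p \<dollar> n - fst q \<dollar> n = 0"
          using lin_uniq(1)[OF w, where u="fst p \<dollar> n - fst q \<dollar> n" and v="snd p \<dollar> n - snd q \<dollar> n"]
          unfolding e1 e2 by simp
        have u2: "snd p \<dollar> n - snd q \<dollar> n = 0"
          using lin_uniq(2)[OF w, where u="fst p \<dollar> n - fst q \<dollar> n" and v="snd p \<dollar> n - snd q \<dollar> n"]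
          unfolding e1 e2 by simp
        show ?thesis using u1 u2 by simp
      qed
      then show ?case using Suc.IH less_Suc_eq by auto
    qed
    then have "fst p = fst q" "snd p = snd q" by (auto intro: fps_ext)
    then show ?thesis by (simp add: prod_eq_iff)
  qed
  define S where "S = approxS F G TF TG w"
  define U where "U = Abs_fps (\<lambda>k. fst (S k) \<dollar> k)"
  define V where "V = Abs_fps (\<lambda>k. snd (S k) \<dollar> k)"
  have agree: "U \<dollar> k = fst (S n) \<dollar> k \<and> V \<dollar> k = snd (S n) \<dollar> k" if "k \<le> n" for k n
    using approxS_stable[OF order.refl that, of F G TF TG w] unfolding U_def V_def S_def by simp
  have S0: "fst (S n) \<dollar> 0 = varX" "snd (S n) \<dollar> 0 = varY" for n
    using approxS_stable[of 0 0 n F G TF TG w] unfolding S_def by simp_all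
  have U0: "U \<dollar> 0 = varX" "V \<dollar> 0 = varY" using agree[of 0 0] S0 by simp_all
  have step: "eval2 F (fst (S (Suc n))) (snd (S (Suc n))) \<dollar> Suc n = TF \<dollar> Suc n \<and>
              eval2 G (fst (S (Suc n))) (snd (S (Suc n))) \<dollar> Suc n = TG \<dollar> Suc n" for n
  proof -
    define A where "A = fst (S n)"
    define B where "B = snd (S n)"
    define x where "x = TF \<dollar> Suc n - eval2 F A B \<dollar> Suc n"
    define y where "y = TG \<dollar> Suc n - eval2 G A B \<dollar> Suc n"
    have SS: "fst (S (Suc n)) = Abs_fps (\<lambda>k. if k = Suc n then A \<dollar> k + w*(pdY G*x - pdY F*y) else A \<dollar> k)"
             "snd (S (Suc n)) = Abs_fps (\<lambda>k. if k = Suc n then B \<dollar> k + w*(pdX F*y - pdX G*x) else B \<dollar> k)"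
      unfolding S_def A_def B_def x_def y_def by (simp_all add: Let_def)
    have dU: "fst (S (Suc n)) \<dollar> Suc n - A \<dollar> Suc n = w*(pdY G*x - pdY F*y)"
       and dV: "snd (S (Suc n)) \<dollar> Suc n - B \<dollar> Suc n = w*(pdX F*y - pdX G*x)" unfolding SS by simp_all
    have ag: "\<forall>k<Suc n. fst (S (Suc n)) \<dollar> k = A \<dollar> k \<and> snd (S (Suc n)) \<dollar> k = B \<dollar> k"
      unfolding SS by simp
    have "eval2 F (fst (S (Suc n))) (snd (S (Suc n))) \<dollar> Suc n - eval2 F A B \<dollar> Suc n =
       pdX F * (fst (S (Suc n)) \<dollar> Suc n - A \<dollar> Suc n) + pdY F * (snd (S (Suc n)) \<dollar> Suc n - B \<dollar> Suc n)"
      using gF S0 ag unfolding good_def by blast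
    then have 1: "eval2 F (fst (S (Suc n))) (snd (S (Suc n))) \<dollar> Suc n - eval2 F A B \<dollar> Suc n = x"
      unfolding dU dV lin_sol(1)[OF w] .
    have "eval2 G (fst (S (Suc n))) (snd (S (Suc n))) \<dollar> Suc n - eval2 G A B \<dollar> Suc n =
       pdX G * (fst (S (Suc n)) \<dollar> Suc n - A \<dollar> Suc n) + pdY G * (snd (S (Suc n)) \<dollar> Suc n - B \<dollar> Suc n)"
      using gG S0 ag unfolding good_def by blast
    then have 2: "eval2 G (fst (S (Suc n))) (snd (S (Suc n))) \<dollar> Suc n - eval2 G A B \<dollar> Suc n = y"
      unfolding dU dV lin_sol(2)[OF w] .
    show ?thesis using 1 2 unfolding x_def y_def by (simp add: algebra_simps)
  qed
  have PUV: "?P (U, V)"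
  proof (intro conjI)
    show "eval2 F (fst (U, V)) (snd (U, V)) = TF"
    proof (rule fps_ext)
      fix n show "eval2 F (fst (U, V)) (snd (U, V)) \<dollar> n = TF \<dollar> n"
      proof (cases n)
        case 0
        have "eval2 F U V \<dollar> 0 = F" using gF U0 unfolding good_def by blast
        then show ?thesis using TF0 0 by simp
      next
        case (Suc m)
        have "eval2 F U V \<dollar> n = eval2 F (fst (S n)) (snd (S n)) \<dollar> n"
          using gF agree[of _ n] unfolding good_def causal_def by blast
        then show ?thesis using step[of m] Suc by simp
      qed
    qed
    show "eval2 G (fst (U, V)) (snd (U, V)) = TG"
    proof (rule fps_ext)
      fix n show "eval2 G (fst (U, V)) (snd (U, V)) \<dollar> n = TG \<dollar> n"
      proof (cases n)
        case 0
        have "eval2 G U V \<dollar> 0 = G" using gG U0 unfolding good_def by blast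
        then show ?thesis using TF0 0 by simp
      next
        case (Suc m)
        have "eval2 G U V \<dollar> n = eval2 G (fst (S n)) (snd (S n)) \<dollar> n"
          using gG agree[of _ n] unfolding good_def causal_def by blast
        then show ?thesis using step[of m] Suc by simp
      qed
    qed
  qed (use U0 in simp_all)
  have "\<exists>!UV. ?P UV"
  proof (rule ex1I[of _ "(U,V)"])
    show "?P (U,V)" by (rule PUV)
  next
    fix y assume "?P y"
    then show "y = (U,V)" by (rule uniq[OF _ PUV])
  qed
  then show ?thesis unfolding TF_def TG_def .
qed

end
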